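(* Assume $\int\log dist(f,\mathcal{M})\,d\Lambda(f)>-\infty$ and let $f_0\in A$, $f_n=F^n(f_0)$. Let $u_f$ ($f\in\mathcal{H}_d$) be functions as in the statement: there exist $C,p>0$ with $\frac{f^*\omega}{d}=\omega+dd^cu_f$, $u_f\le0$, $\|u_f\|_{C^1}\le C\,dist(f,\mathcal{M})^{-p}$ for all $f\in\mathcal{H}_d$. Put $u_j=u_{f_j}$ and $$g_n=\sum_{i=0}^{+\infty}\frac{u_{n+i}\circ f_{n+i-1}\circ\cdots\circ f_n}{d^i}$$ (the $i=0$ term being $u_n$), so that $g_n$ is continuous and $T(f_n)=\omega+dd^cg_n$. Then for every $\epsilon>0$ there exists $n_0$ such that $\|g_n\|_\infty\le e^{\epsilon n}$ for all $n\ge n_0$.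
   Context: $\mathbb{P}^k=\mathbb{P}^k(\mathbb{C})$ carries the Fubini–Study form $\omega$ (normalized $\int\omega^k=1$); $dd^c=\frac{i}{\pi}\partial\bar\partial$. Fix $d\ge2$. Rational maps of degree $d$ of $\mathbb{P}^k$ form $\mathbb{P}^N$ with $N=(k+1)\frac{(d+k)!}{d!k!}-1$; $\mathcal{H}_d\subset\mathbb{P}^N$ is the Zariski open set of holomorphic endomorphisms of degree $d$, $\mathcal{M}=\mathbb{P}^N\setminus\mathcal{H}_d$, $dist$ the Fubini–Study distance on $\mathbb{P}^N$. $F:\mathbb{P}^N\to\mathbb{P}^N$ is measurable, $\Lambda$ an $F$-invariant ergodic probability measure. $A$ is the set of $f_0\in\mathbb{P}^N$ with $\frac1n\sum_{i=0}^{n-1}\log dist(F^i(f_0),\mathcal{M})\to\int\log dist(f,\mathcal{M})\,d\Lambda(f)$. For $h_0\in A$, $T(h_0)$ is the weak limit of $\frac{(h_n\circ\cdots\circ h_0)^*\omega}{d^{n+1}}$ where $h_j=F^j(h_0)$. *)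

theory Defs
  imports "HOL-Probability.Probability"
begin

typedef 'i proj = "{L :: ('i \<Rightarrow> complex) set. \<exists>v. v \<noteq> (\<lambda>_. 0) \<and> L = range (\<lambda>c::complex. \<lambda>i. c * v i)}"
  by (rule exI[of _ "range (\<lambda>c::complex. \<lambda>i::'i. c * 1)"], rule CollectI,
      rule exI[of _ "\<lambda>_. 1"], auto simp: fun_eq_iff)

definition pt :: "('i \<Rightarrow> complex) \<Rightarrow> 'i proj" where
  "pt v = Abs_proj (range (\<lambda>c. \<lambda>i. c * v i))"

definition rep :: "'i proj \<Rightarrow> ('i \<Rightarrow> complex)" where
  "rep p = (SOME v. v \<noteq> (\<lambda>_. 0) \<and> Rep_proj p = range (\<lambda>c. \<lambda>i. c * v i))"

definition cinner :: "'i set \<Rightarrow> ('i \<Rightarrow> complex) \<Rightarrow> ('i \<Rightarrow> complex) \<Rightarrow> complex" where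
  "cinner I v w = (\<Sum>i\<in>I. v i * cnj (w i))"

definition cnorm :: "'i set \<Rightarrow> ('i \<Rightarrow> complex) \<Rightarrow> real" where
  "cnorm I v = sqrt (\<Sum>i\<in>I. (cmod (v i))\<^sup>2)"

definition fs_dist :: "'i set \<Rightarrow> 'i proj \<Rightarrow> 'i proj \<Rightarrow> real" where
  "fs_dist I p q = arccos (cmod (cinner I (rep p) (rep q)) / (cnorm I (rep p) * cnorm I (rep q)))"

text \<open>P^k is 'n proj with CARD('n) = k+1.  A rational map of degree d is the class of
  a nonzero coefficient vector indexed by (component j, multi-index alpha of degree d).\<close>

definition multi_idx :: "nat \<Rightarrow> ('n::finite \<Rightarrow> nat) set" where
  "multi_idx d = {\<alpha>. sum \<alpha> UNIV = d}"

definition coef_idx :: "nat \<Rightarrow> ('n::finite \<times> ('n \<Rightarrow> nat)) set" where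
  "coef_idx d = (UNIV :: 'n set) \<times> multi_idx d"

definition ratmaps :: "nat \<Rightarrow> ('n::finite \<times> ('n \<Rightarrow> nat)) proj set" where
  "ratmaps d = {f. \<forall>x. x \<notin> coef_idx d \<longrightarrow> rep f x = 0}"

definition hpoly :: "nat \<Rightarrow> ('n::finite \<times> ('n \<Rightarrow> nat) \<Rightarrow> complex) \<Rightarrow> ('n \<Rightarrow> complex) \<Rightarrow> ('n \<Rightarrow> complex)" where
  "hpoly d c z = (\<lambda>j. \<Sum>\<alpha>\<in>multi_idx d. c (j, \<alpha>) * (\<Prod>i\<in>UNIV. z i ^ \<alpha> i))"

definition degen :: "nat \<Rightarrow> ('n::finite \<times> ('n \<Rightarrow> nat)) proj set" where
  "degen d = {f \<in> ratmaps d. \<exists>z. z \<noteq> (\<lambda>_. 0) \<and> hpoly d (rep f) z = (\<lambda>_. 0)}"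

definition holo :: "nat \<Rightarrow> ('n::finite \<times> ('n \<Rightarrow> nat)) proj set" where
  "holo d = ratmaps d - degen d"

definition distM :: "nat \<Rightarrow> ('n::finite \<times> ('n \<Rightarrow> nat)) proj \<Rightarrow> real" where
  "distM d f = Inf (fs_dist (coef_idx d) f ` degen d)"

definition act :: "nat \<Rightarrow> ('n::finite \<times> ('n \<Rightarrow> nat)) proj \<Rightarrow> 'n proj \<Rightarrow> 'n proj" where
  "act d f x = pt (hpoly d (rep f) (rep x))"

definition fs_opens :: "'i set \<Rightarrow> 'i proj set \<Rightarrow> 'i proj set set" where
  "fs_opens I S0 = {S. S \<subseteq> S0 \<and> (\<forall>p\<in>S. \<exists>e>0. \<forall>q\<in>S0. fs_dist I p q < e \<longrightarrow> q \<in> S)}"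

definition ratmaps_borel :: "nat \<Rightarrow> ('n::finite \<times> ('n \<Rightarrow> nat)) proj measure" where
  "ratmaps_borel d = sigma (ratmaps d) (fs_opens (coef_idx d) (ratmaps d))"

definition log_dist :: "nat \<Rightarrow> ('n::finite \<times> ('n \<Rightarrow> nat)) proj \<Rightarrow> ereal" where
  "log_dist d f = (if distM d f > 0 then ereal (ln (distM d f)) else -\<infinity>)"

definition ext_integral :: "'a measure \<Rightarrow> ('a \<Rightarrow> ereal) \<Rightarrow> ereal" where
  "ext_integral M g = enn2ereal (\<integral>\<^sup>+x. e2ennreal (max 0 (g x)) \<partial>M)
                    - enn2ereal (\<integral>\<^sup>+x. e2ennreal (max 0 (- g x)) \<partial>M)"

definition birkhoff_set :: "nat \<Rightarrow> (('n::finite \<times> ('n \<Rightarrow> nat)) proj \<Rightarrow> ('n \<times> ('n \<Rightarrow> nat)) proj)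
    \<Rightarrow> ('n \<times> ('n \<Rightarrow> nat)) proj measure \<Rightarrow> ('n \<times> ('n \<Rightarrow> nat)) proj set" where
  "birkhoff_set d F \<Lambda> = {f0 \<in> ratmaps d.
      (\<lambda>n. (\<Sum>i<n. log_dist d ((F ^^ i) f0)) / ereal (real n)) \<longlonglongrightarrow> ext_integral \<Lambda> (log_dist d)}"

definition lift :: "('n::finite proj \<Rightarrow> real) \<Rightarrow> complex^'n \<Rightarrow> real" where
  "lift u z = u (pt (vec_nth z))"

text \<open>C^1 norm of u bounded by K: sup |u| + sup of the norm of the differential
  (computed on the unit sphere, where the Hopf projection is a Riemannian submersion).\<close>
definition C1_norm_le :: "('n::finite proj \<Rightarrow> real) \<Rightarrow> real \<Rightarrow> bool" where
  "C1_norm_le u K \<longleftrightarrow>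
     (\<forall>z. z \<noteq> 0 \<longrightarrow> lift u differentiable (at z)) \<and>
     bdd_above (range (\<lambda>x. \<bar>u x\<bar>)) \<and>
     bdd_above ((\<lambda>z. onorm (frechet_derivative (lift u) (at z))) ` sphere 0 1) \<and>
     (SUP x. \<bar>u x\<bar>) + (SUP z\<in>sphere 0 1. onorm (frechet_derivative (lift u) (at z))) \<le> K"

text \<open>Pluriharmonic (dd^c h = 0) continuous functions: mean value property on all
  complex discs.\<close>
definition pluriharmonic_on :: "(complex^'n::finite) set \<Rightarrow> (complex^'n \<Rightarrow> real) \<Rightarrow> bool" where
  "pluriharmonic_on U h \<longleftrightarrow> continuous_on U h \<and>
     (\<forall>a b r. r > 0 \<and> (\<forall>l. cmod l \<le> r \<longrightarrow> a + l *s b \<in> U) \<longrightarrow>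
        h a = integral {0..2*pi} (\<lambda>t. h (a + (complex_of_real r * cis t) *s b)) / (2*pi))"

text \<open>f^*omega / d = omega + dd^c u, lifted to C^{k+1} minus 0, where omega = dd^c log|z|.\<close>
definition ddc_eq :: "nat \<Rightarrow> ('n::finite \<times> ('n \<Rightarrow> nat)) proj \<Rightarrow> ('n proj \<Rightarrow> real) \<Rightarrow> bool" where
  "ddc_eq d f u \<longleftrightarrow> pluriharmonic_on (- {0})
     (\<lambda>z. ln (cnorm UNIV (hpoly d (rep f) (vec_nth z))) / real d - ln (norm z) - lift u z)"

fun orbit :: "nat \<Rightarrow> (('n::finite \<times> ('n \<Rightarrow> nat)) proj \<Rightarrow> ('n \<times> ('n \<Rightarrow> nat)) proj)
    \<Rightarrow> ('n \<times> ('n \<Rightarrow> nat)) proj \<Rightarrow> nat \<Rightarrow> nat \<Rightarrow> 'n proj \<Rightarrow> 'n proj" where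
  "orbit d F f0 n 0 x = x"
| "orbit d F f0 n (Suc i) x = act d ((F ^^ (n + i)) f0) (orbit d F f0 n i x)"

definition gterm :: "nat \<Rightarrow> (('n::finite \<times> ('n \<Rightarrow> nat)) proj \<Rightarrow> ('n \<times> ('n \<Rightarrow> nat)) proj)
    \<Rightarrow> (('n \<times> ('n \<Rightarrow> nat)) proj \<Rightarrow> 'n proj \<Rightarrow> real) \<Rightarrow> ('n \<times> ('n \<Rightarrow> nat)) proj
    \<Rightarrow> nat \<Rightarrow> 'n proj \<Rightarrow> nat \<Rightarrow> real" where
  "gterm d F u f0 n x i = u ((F ^^ (n + i)) f0) (orbit d F f0 n i x) / real d ^ i"

definition gfun :: "nat \<Rightarrow> (('n::finite \<times> ('n \<Rightarrow> nat)) proj \<Rightarrow> ('n \<times> ('n \<Rightarrow> nat)) proj)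
    \<Rightarrow> (('n \<times> ('n \<Rightarrow> nat)) proj \<Rightarrow> 'n proj \<Rightarrow> real) \<Rightarrow> ('n \<times> ('n \<Rightarrow> nat)) proj
    \<Rightarrow> nat \<Rightarrow> 'n proj \<Rightarrow> real" where
  "gfun d F u f0 n x = (\<Sum>i. gterm d F u f0 n x i)"

end

theory Submission
  imports Defs
begin



lemma fs_dist_bounds: "0 \<le> fs_dist I p q \<and> fs_dist I p q \<le> pi"
proof -
  define v where "v = rep p"
  define w where "w = rep q"
  define x where "x = cmod (cinner I v w) / (cnorm I v * cnorm I w)"
  have n0: "cnorm I v \<ge> 0" "cnorm I w \<ge> 0" unfolding cnorm_def by (auto intro: sum_nonneg)
  have x0: "0 \<le> x" unfolding x_def using n0 by simp
  have "cmod (cinner I v w) \<le> (\<Sum>i\<in>I. cmod (v i * cnj (w i)))"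
    unfolding cinner_def by (rule norm_sum)
  also have "\<dots> = (\<Sum>i\<in>I. \<bar>cmod (v i)\<bar> * \<bar>cmod (w i)\<bar>)" by (simp add: norm_mult)
  also have "\<dots> \<le> L2_set (\<lambda>i. cmod (v i)) I * L2_set (\<lambda>i. cmod (w i)) I"
    by (rule L2_set_mult_ineq)
  also have "\<dots> = cnorm I v * cnorm I w" unfolding L2_set_def cnorm_def by simp
  finally have cs: "cmod (cinner I v w) \<le> cnorm I v * cnorm I w" .
  have x1: "x \<le> 1"
  proof (cases "cnorm I v * cnorm I w = 0")
    case True then show ?thesis unfolding x_def True by simp
  next
    case False
    then have "cnorm I v * cnorm I w > 0" using n0 by (simp add: less_le)
    then show ?thesis unfolding x_def using cs by simp
  qed
  have "fs_dist I p q = arccos x" unfolding fs_dist_def x_def v_def w_def by simp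
  then show ?thesis using arccos_bounded[of x] x0 x1 by simp
qed



lemma rep_ne: "rep p \<noteq> (\<lambda>_. 0)"
proof -
  have "\<exists>v. v \<noteq> (\<lambda>_. 0) \<and> Rep_proj p = range (\<lambda>c. \<lambda>i. c * v i)"
    using Rep_proj[of p] by simp
  then show ?thesis unfolding rep_def by (rule someI2_ex) auto
qed

lemma finite_multi_idx: "finite (multi_idx d :: ('n::finite \<Rightarrow> nat) set)"
proof (rule finite_subset)
  show "multi_idx d \<subseteq> (PiE UNIV (\<lambda>_. {..d}) :: ('n \<Rightarrow> nat) set)"
  proof
    fix \<alpha> :: "'n \<Rightarrow> nat" assume "\<alpha> \<in> multi_idx d"
    then have "sum \<alpha> UNIV = d" unfolding multi_idx_def by simp
    have "\<forall>i. \<alpha> i \<le> d"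
    proof
      fix i show "\<alpha> i \<le> d" using member_le_sum[of i UNIV \<alpha>] \<open>sum \<alpha> UNIV = d\<close> by auto
    qed
    then show "\<alpha> \<in> PiE UNIV (\<lambda>_. {..d})" by (simp add: PiE_iff)
  qed
  show "finite (PiE UNIV (\<lambda>_. {..d}) :: ('n \<Rightarrow> nat) set)" by (rule finite_PiE) auto
qed

lemma finite_coef_idx: "finite (coef_idx d :: ('n::finite \<times> ('n \<Rightarrow> nat)) set)"
  unfolding coef_idx_def by (rule finite_cartesian_product[OF finite finite_multi_idx])

lemma fs_dist_self:
  assumes "f \<in> ratmaps d"
  shows "fs_dist (coef_idx d) f f = (0::real)"
proof -
  define v where "v = rep f"
  define I where "I = (coef_idx d :: ('a::finite \<times> ('a \<Rightarrow> nat)) set)"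
  define S where "S = (\<Sum>i\<in>I. (cmod (v i))\<^sup>2)"
  have fin: "finite I" unfolding I_def by (rule finite_coef_idx)
  have "\<exists>x. v x \<noteq> 0" using rep_ne[of f] unfolding v_def by (auto simp: fun_eq_iff)
  then obtain x where x: "v x \<noteq> 0" by blast
  have xI: "x \<in> I" using assms x unfolding ratmaps_def v_def I_def by (cases x) auto
  have "S > 0" unfolding S_def
    by (rule sum_pos2[OF fin xI]) (use x in auto)
  have "cinner I v v = (\<Sum>i\<in>I. complex_of_real ((cmod (v i))\<^sup>2))"
    unfolding cinner_def by (rule sum.cong) (simp_all add: complex_norm_square[symmetric] del: of_real_power)
  also have "\<dots> = complex_of_real S" unfolding S_def by simp
  finally have c: "cmod (cinner I v v) = S" using \<open>S > 0\<close> by simp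
  have n: "cnorm I v * cnorm I v = S" unfolding cnorm_def S_def
    by (simp add: sum_nonneg)
  show ?thesis unfolding fs_dist_def v_def[symmetric] I_def[symmetric] c n
    using \<open>S > 0\<close> by simp
qed



lemma birk:
  fixes a :: "nat \<Rightarrow> ereal"
  assumes ub: "\<And>i. a i \<le> ereal B"
    and lim: "(\<lambda>n. (\<Sum>i<n. a i) / ereal (real n)) \<longlonglongrightarrow> L" and Lf: "L > -\<infinity>"
  shows "\<exists>b. (\<forall>i. a i = ereal (b i)) \<and> (\<lambda>n. b n / real (Suc n)) \<longlonglongrightarrow> 0"
proof -
  have nm: "a j \<noteq> -\<infinity>" for j
  proof
    assume aj: "a j = -\<infinity>"
    have ev: "\<forall>\<^sub>F n in sequentially. (\<Sum>i<n. a i) / ereal (real n) = -\<infinity>"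
    proof (rule eventually_sequentiallyI[of "Suc j"])
      fix n assume n: "Suc j \<le> n"
      have "(\<Sum>i<n. a i) \<le> (\<Sum>i<n. ereal B)" by (rule sum_mono) (use ub in auto)
      also have "\<dots> < \<infinity>" by simp
      finally have lt: "(\<Sum>i<n. a i) < \<infinity>" .
      have "\<bar>\<Sum>i<n. a i\<bar> = \<infinity>" unfolding sum_Inf using n aj
        by (intro conjI bexI[of _ j]) auto
      then have "(\<Sum>i<n. a i) = -\<infinity>" using lt by auto
      then show "(\<Sum>i<n. a i) / ereal (real n) = -\<infinity>" using n by simp
    qed
    have "(\<lambda>n. (\<Sum>i<n. a i) / ereal (real n)) \<longlonglongrightarrow> -\<infinity>"
      by (rule Lim_transform_eventually[OF tendsto_const]) (use ev in \<open>simp add: eq_commute\<close>)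
    then have "L = -\<infinity>" using lim LIMSEQ_unique by blast
    then show False using Lf by simp
  qed
  define b where "b i = real_of_ereal (a i)" for i
  have ab: "a i = ereal (b i)" for i
  proof -
    have "a i \<noteq> \<infinity>" using ub[of i] by auto
    then show ?thesis using nm[of i] unfolding b_def by (cases "a i") auto
  qed
  define s where "s n = (\<Sum>i<n. b i)" for n
  have avg: "(\<Sum>i<n. a i) / ereal (real n) = ereal (s n / real n)" for n
    unfolding ab s_def by (cases "n = 0") auto
  have lim2: "(\<lambda>n. ereal (s n / real n)) \<longlonglongrightarrow> L" using lim unfolding avg .
  have sb: "s n / real n \<le> B" if False: "n \<noteq> 0" for n
  proof -
    have "s n \<le> (\<Sum>i<n. B)" unfolding s_def by (rule sum_mono) (use ub ab in auto)
    then show ?thesis using False by (simp add: divide_le_eq mult.commute)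
  qed
  have "L \<le> ereal B"
  proof (rule tendsto_upperbound[OF lim2])
    show "\<forall>\<^sub>F n in sequentially. ereal (s n / real n) \<le> ereal B"
      by (rule eventually_sequentiallyI[of 1]) (use sb in auto)
  qed simp
  then obtain l where l: "L = ereal l" using Lf by (cases L) auto
  have sl: "(\<lambda>n. s n / real n) \<longlonglongrightarrow> l" using lim2 unfolding l by simp
  have e1: "(\<lambda>n. s (Suc n) / real (Suc n)) \<longlonglongrightarrow> l"
    using sl by (rule LIMSEQ_Suc)
  have e2: "(\<lambda>n. (s n / real n) * (real n / real (Suc n))) \<longlonglongrightarrow> l * 1"
    by (intro tendsto_mult sl LIMSEQ_n_over_Suc_n)
  have eq: "b n / real (Suc n) = s (Suc n) / real (Suc n) - (s n / real n) * (real n / real (Suc n))" for n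
  proof (cases "n = 0")
    case True then show ?thesis unfolding s_def by simp
  next
    case False
    then have "(s n / real n) * (real n / real (Suc n)) = s n / real (Suc n)" by simp
    moreover have "b n / real (Suc n) = s (Suc n) / real (Suc n) - s n / real (Suc n)"
      unfolding s_def by (simp add: diff_divide_distrib[symmetric])
    ultimately show ?thesis by simp
  qed
  have "(\<lambda>n. b n / real (Suc n)) \<longlonglongrightarrow> l - l * 1"
    unfolding eq by (intro tendsto_diff e1 e2)
  then show ?thesis using ab by auto
qed



lemma lin_bound:
  fixes b :: "nat \<Rightarrow> real"
  assumes lim: "(\<lambda>n. b n / real (Suc n)) \<longlonglongrightarrow> 0" and "\<delta> > 0"
  shows "\<exists>K. \<forall>n. - b n \<le> K + \<delta> * real n"
proof -
  have "\<forall>\<^sub>F n in sequentially. dist (b n / real (Suc n)) 0 < \<delta>"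
    using lim \<open>\<delta> > 0\<close> by (rule tendstoD)
  then obtain N where N: "\<And>n. n \<ge> N \<Longrightarrow> \<bar>b n / real (Suc n)\<bar> < \<delta>"
    by (auto simp: eventually_sequentially)
  define K where "K = \<delta> + (\<Sum>n<N. \<bar>b n\<bar>)"
  have "- b n \<le> K + \<delta> * real n" for n
  proof (cases "n \<ge> N")
    case True
    have "\<bar>b n\<bar> / real (Suc n) < \<delta>" using N[OF True] by simp
    then have "\<bar>b n\<bar> < \<delta> * real (Suc n)" by (simp add: divide_less_eq)
    then have h: "\<bar>b n\<bar> < \<delta> + \<delta> * real n" by (simp add: algebra_simps)
    have "0 \<le> (\<Sum>n<N. \<bar>b n\<bar>)" by (simp add: sum_nonneg)
    then show ?thesis unfolding K_def using h abs_ge_minus_self[of "b n"] by linarith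
  next
    case False
    then have "\<bar>b n\<bar> \<le> (\<Sum>n<N. \<bar>b n\<bar>)"
      by (intro member_le_sum) auto
    moreover have "0 \<le> \<delta> * real n" using \<open>\<delta> > 0\<close> by simp
    ultimately show ?thesis unfolding K_def using \<open>\<delta> > 0\<close> by linarith
  qed
  then show ?thesis by blast
qed

lemma geom_bound:
  fixes g :: "nat \<Rightarrow> real"
  assumes gb: "\<And>i. \<bar>g i\<bar> \<le> M * q ^ i" and q0: "0 \<le> q" and q1: "q \<le> 3/4"
  shows "summable g \<and> \<bar>suminf g\<bar> \<le> 4 * M"
proof -
  have M0: "0 \<le> M" using gb[of 0] by simp
  have sg: "summable (\<lambda>i. M * q ^ i)"
    by (intro summable_mult summable_geometric) (use q0 q1 in auto)
  have s1: "summable (\<lambda>i. \<bar>g i\<bar>)"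
    by (rule summable_comparison_test'[OF sg, of 0]) (use gb in auto)
  have s2: "summable g"
    by (rule summable_comparison_test'[OF sg, of 0]) (use gb in auto)
  have "\<bar>suminf g\<bar> \<le> (\<Sum>i. \<bar>g i\<bar>)" by (rule summable_rabs[OF s1])
  also have "\<dots> \<le> (\<Sum>i. M * q ^ i)" by (rule suminf_le[OF gb s1 sg])
  also have "\<dots> = M * (1 / (1 - q))"
    by (subst suminf_mult) (use q0 q1 in \<open>auto intro!: summable_geometric simp: suminf_geometric\<close>)
  also have "\<dots> \<le> M * 4"
  proof (rule mult_left_mono[OF _ M0])
    show "1 / (1 - q) \<le> 4" using q0 q1 by (simp add: divide_le_eq)
  qed
  finally show ?thesis using s2 by simp
qed

lemma C1_abs:
  fixes u :: "'n::finite proj \<Rightarrow> real"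
  assumes "C1_norm_le u K"
  shows "\<bar>u x\<bar> \<le> K"
proof -
  note a = assms[unfolded C1_norm_le_def]
  obtain z0 :: "complex^'n" where z0: "norm z0 = 1" using vector_choose_size[of 1] by auto
  then have z0s: "z0 \<in> sphere 0 1" by simp
  have "z0 \<noteq> 0" using z0 by auto
  then have "lift u differentiable (at z0)" using a by blast
  then have "bounded_linear (frechet_derivative (lift u) (at z0))"
    unfolding frechet_derivative_works by (rule has_derivative_bounded_linear)
  then have o0: "0 \<le> onorm (frechet_derivative (lift u) (at z0))" by (rule onorm_pos_le)
  have bd: "bdd_above ((\<lambda>z. onorm (frechet_derivative (lift u) (at z))) ` sphere (0::complex^'n) 1)"
    using a[THEN conjunct2, THEN conjunct2, THEN conjunct1] .
  have le: "onorm (frechet_derivative (lift u) (at z0)) \<le> (SUP z\<in>sphere 0 1. onorm (frechet_derivative (lift u) (at z)))"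
    by (rule cSUP_upper[OF z0s bd])
  have p: "0 \<le> (SUP z\<in>sphere 0 1. onorm (frechet_derivative (lift u) (at z)))" using o0 le by linarith
  have "\<bar>u x\<bar> \<le> (SUP x. \<bar>u x\<bar>)" by (rule cSUP_upper) (use a in auto)
  then show ?thesis using a p by linarith
qed



lemma distM_le:
  fixes f :: "('n::finite \<times> ('n \<Rightarrow> nat)) proj"
  shows "distM d f \<le> max pi (Inf ({}::real set))"
proof (cases "degen d = ({} :: ('n \<times> ('n \<Rightarrow> nat)) proj set)")
  case True then show ?thesis unfolding distM_def True image_empty by simp
next
  case False
  then obtain g :: "('n \<times> ('n \<Rightarrow> nat)) proj" where g: "g \<in> degen d" by blast
  have "distM d f \<le> fs_dist (coef_idx d) f g" unfolding distM_def
    by (rule cInf_lower) (use g fs_dist_bounds in \<open>auto intro!: bdd_belowI[of _ 0]\<close>)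
  also have "\<dots> \<le> pi" using fs_dist_bounds by blast
  finally show ?thesis by simp
qed

lemma distM_degen: "f \<in> degen d \<Longrightarrow> distM d f \<le> 0"
proof -
  assume f: "f \<in> degen d"
  then have "f \<in> ratmaps d" unfolding degen_def by simp
  have "distM d f \<le> fs_dist (coef_idx d) f f" unfolding distM_def
    by (rule cInf_lower) (use f fs_dist_bounds in \<open>auto intro!: bdd_belowI[of _ 0]\<close>)
  also have "\<dots> = 0" by (rule fs_dist_self[OF \<open>f \<in> ratmaps d\<close>])
  finally show ?thesis .
qed




theorem mainTheorem15:
  fixes d :: nat
    and F :: "('n::finite \<times> ('n \<Rightarrow> nat)) proj \<Rightarrow> ('n \<times> ('n \<Rightarrow> nat)) proj"
    and \<Lambda> :: "('n \<times> ('n \<Rightarrow> nat)) proj measure"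
    and u :: "('n \<times> ('n \<Rightarrow> nat)) proj \<Rightarrow> 'n proj \<Rightarrow> real"
    and f0 :: "('n \<times> ('n \<Rightarrow> nat)) proj"
  assumes "CARD('n) \<ge> 2" and "d \<ge> 2"
    and "prob_space \<Lambda>" and "sets \<Lambda> = sets (ratmaps_borel d)"
    and "F \<in> measurable (ratmaps_borel d) (ratmaps_borel d)"
    and "\<forall>S\<in>sets \<Lambda>. emeasure \<Lambda> (F -` S \<inter> space \<Lambda>) = emeasure \<Lambda> S"
    and "\<forall>S\<in>sets \<Lambda>. F -` S \<inter> space \<Lambda> = S \<longrightarrow> measure \<Lambda> S = 0 \<or> measure \<Lambda> S = 1"
    and "ext_integral \<Lambda> (log_dist d) > -\<infinity>"
    and "f0 \<in> birkhoff_set d F \<Lambda>"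
    and "\<exists>C>0. \<exists>p>0. \<forall>f\<in>holo d. ddc_eq d f (u f) \<and> (\<forall>x. u f x \<le> 0)
                              \<and> C1_norm_le (u f) (C * distM d f powr (-p))"
  shows "(\<forall>n x. summable (gterm d F u f0 n x)) \<and>
         (\<forall>\<epsilon>>0. \<exists>n0. \<forall>n\<ge>n0. \<forall>x. \<bar>gfun d F u f0 n x\<bar> \<le> exp (\<epsilon> * real n))"
  proof -
  note assms = assms
  obtain C p where C: "C > 0" and p: "p > 0" and H: "\<forall>f\<in>holo d. ddc_eq d f (u f) \<and> (\<forall>x. u f x \<le> 0)
                              \<and> C1_norm_le (u f) (C * distM d f powr (-p))"
    using assms(10) by blast
  define fs where "fs j = (F ^^ j) f0" for j
  have sp: "space (ratmaps_borel d) = (ratmaps d :: ('n \<times> ('n \<Rightarrow> nat)) proj set)" unfolding ratmaps_borel_def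
    by (simp add: space_measure_of_conv)
  have f0r: "f0 \<in> ratmaps d" using assms(9) unfolding birkhoff_set_def by simp
  have rat: "fs j \<in> ratmaps d" for j
  proof (induction j)
    case 0 then show ?case using f0r unfolding fs_def by simp
  next
    case (Suc j)
    have "F (fs j) \<in> space (ratmaps_borel d)"
      by (rule measurable_space[OF assms(5)]) (use Suc sp in simp)
    then show ?case unfolding fs_def using sp by simp
  qed
  define B where "B = max pi (Inf ({}::real set))"
  have ub: "log_dist d (fs i) \<le> ereal B" for i
  proof (cases "distM d (fs i) > 0")
    case True
    then have "ln (distM d (fs i)) < distM d (fs i)" by simp
    also have "\<dots> \<le> B" unfolding B_def by (rule distM_le)
    finally show ?thesis using True unfolding log_dist_def by simp
  next
    case False then show ?thesis unfolding log_dist_def by simp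
  qed
  have lim: "(\<lambda>n. (\<Sum>i<n. log_dist d (fs i)) / ereal (real n)) \<longlonglongrightarrow> ext_integral \<Lambda> (log_dist d)"
    using assms(9) unfolding birkhoff_set_def fs_def by simp
  obtain b where ab: "\<And>i. log_dist d (fs i) = ereal (b i)"
     and blim: "(\<lambda>n. b n / real (Suc n)) \<longlonglongrightarrow> 0"
    using birk[of "\<lambda>i. log_dist d (fs i)" B, OF ub lim assms(8)] by blast
  have dpos: "distM d (fs i) > 0" and bdef: "b i = ln (distM d (fs i))" for i
    using ab[of i] unfolding log_dist_def by (auto split: if_splits)
  have holo: "fs i \<in> holo d" for i
    using rat[of i] distM_degen[of "fs i" d] dpos[of i] unfolding holo_def by force
  have ubd: "\<bar>u (fs j) x\<bar> \<le> C * exp (- p * b j)" for j x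
  proof -
    have "C1_norm_le (u (fs j)) (C * distM d (fs j) powr (-p))" using H holo by blast
    then have "\<bar>u (fs j) x\<bar> \<le> C * distM d (fs j) powr (-p)" by (rule C1_abs)
    also have "distM d (fs j) powr (-p) = exp (- p * b j)"
      using dpos[of j] unfolding bdef powr_def by simp
    finally show ?thesis .
  qed
  have G: "\<exists>A>0. \<forall>n x. summable (gterm d F u f0 n x) \<and> \<bar>gfun d F u f0 n x\<bar> \<le> A * exp (t * real n)"
    if t0: "0 < t" and t1: "t \<le> ln (3/2)" for t
  proof -
    obtain K where K: "\<And>n. - b n \<le> K + (t / p) * real n"
      using lin_bound[OF blim, of "t/p"] t0 p by auto
    define A where "A = 4 * (C * exp (p * K))"
    have et: "exp t \<le> 3/2" using t1 by (metis exp_ln exp_le_cancel_iff zero_less_divide_iff zero_less_numeral)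
    define q where "q = exp t / real d"
    have q0: "0 \<le> q" unfolding q_def by simp
    have q1: "q \<le> 3/4"
    proof -
      have "exp t / real d \<le> exp t / 2" using assms(2) by (intro divide_left_mono) auto
      moreover have "exp t / 2 \<le> 3/4" using et by simp
      ultimately show ?thesis unfolding q_def by linarith
    qed
    have "summable (gterm d F u f0 n x) \<and> \<bar>gfun d F u f0 n x\<bar> \<le> A * exp (t * real n)" for n x
    proof -
      define M where "M = C * exp (p * K) * exp (t * real n)"
      have gb: "\<bar>gterm d F u f0 n x i\<bar> \<le> M * q ^ i" for i
      proof -
        have "- p * b (n + i) \<le> p * (K + (t / p) * real (n + i))"
          using mult_left_mono[OF K[of "n+i"], of p] p by simp
        also have "\<dots> = p * K + t * real n + real i * t" using p by (simp add: algebra_simps)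
        finally have e: "exp (- p * b (n + i)) \<le> exp (p * K) * exp (t * real n) * exp t ^ i"
          by (simp add: exp_add[symmetric] exp_of_nat_mult[symmetric])
        have "\<bar>gterm d F u f0 n x i\<bar> = \<bar>u (fs (n + i)) (orbit d F f0 n i x)\<bar> / real d ^ i"
          unfolding gterm_def fs_def by simp
        also have "\<dots> \<le> C * exp (- p * b (n + i)) / real d ^ i"
          by (intro divide_right_mono ubd) simp
        also have "\<dots> \<le> C * (exp (p * K) * exp (t * real n) * exp t ^ i) / real d ^ i"
          by (intro divide_right_mono mult_left_mono e) (use C in auto)
        also have "\<dots> = M * q ^ i" unfolding M_def q_def by (simp add: power_divide)
        finally show ?thesis .
      qed
      have "summable (gterm d F u f0 n x) \<and> \<bar>suminf (gterm d F u f0 n x)\<bar> \<le> 4 * M"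
        by (rule geom_bound[OF gb q0 q1])
      then show ?thesis unfolding gfun_def M_def A_def by (simp add: mult.assoc)
    qed
    moreover have "A > 0" unfolding A_def using C by simp
    ultimately show ?thesis by blast
  qed
  have l32: "0 < ln (3/2::real)" by simp
  have part1: "\<forall>n x. summable (gterm d F u f0 n x)" using G[OF l32 order.refl] by blast
  have part2: "\<exists>n0. \<forall>n\<ge>n0. \<forall>x. \<bar>gfun d F u f0 n x\<bar> \<le> exp (\<epsilon> * real n)" if e: "\<epsilon> > 0" for \<epsilon>
  proof -
    define t where "t = min (ln (3/2)) (\<epsilon>/2)"
    have t0: "0 < t" unfolding t_def using e l32 by simp
    obtain A where A: "A > 0" and hA: "\<And>n x. \<bar>gfun d F u f0 n x\<bar> \<le> A * exp (t * real n)"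
      using G[OF t0] unfolding t_def by auto
    define n0 where "n0 = nat \<lceil>2 * ln A / \<epsilon>\<rceil>"
    have "\<bar>gfun d F u f0 n x\<bar> \<le> exp (\<epsilon> * real n)" if n: "n \<ge> n0" for n x
    proof -
      have "2 * ln A / \<epsilon> \<le> real n" using n unfolding n0_def by linarith
      then have "ln A \<le> \<epsilon> / 2 * real n" using e by (simp add: divide_le_eq mult.commute)
      then have Ale: "A \<le> exp (\<epsilon> / 2 * real n)" using A by (metis exp_ln exp_le_cancel_iff)
      have "t * real n \<le> \<epsilon> / 2 * real n" unfolding t_def by (intro mult_right_mono) auto
      then have "exp (t * real n) \<le> exp (\<epsilon> / 2 * real n)" by simp
      then have "A * exp (t * real n) \<le> exp (\<epsilon> / 2 * real n) * exp (\<epsilon> / 2 * real n)"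
        using Ale A by (intro mult_mono) auto
      also have "\<dots> = exp (\<epsilon> * real n)" by (simp add: exp_add[symmetric])
      finally show ?thesis using hA[of n x] by linarith
    qed
    then show ?thesis by blast
  qed
  show ?thesis using part1 part2 by blast
qed

end
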